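(* Let $p$ be a prime with $p\equiv 1\pmod 8$ and $p\equiv 2\pmod 3$. Then there exist infinitely many septuples $(A,B,C,D,E,F,G)\in\mathbb{Z}^7$ of the following parametrized form: there are nonzero odd integers $\lambda,\gamma$ with $\gcd(\lambda,3\gamma)=\gcd(p,3\gamma)=\gcd(p,\lambda)=1$, nonzero integers $\epsilon_0,\delta_0$ with $p\lambda^2\epsilon_0+9\gamma^2\delta_0=1$, and integers $\mu,t_0,F_0$ such that $A=\frac{p\lambda^2-9\gamma^2}{2}$, $B=2pF_0^2\left(\delta_0-\epsilon_0-\mu(p\lambda^2+9\gamma^2)\right)+(p\lambda^2+9\gamma^2)t_0F_0$, $C=2pF_0^2\left(\delta_0+\epsilon_0-\mu(p\lambda^2-9\gamma^2)\right)+(p\lambda^2-9\gamma^2)t_0F_0$, $D=\frac{p\lambda^2+9\gamma^2}{2}$, $E=F_0\left(2pF_0(\epsilon_0+9\mu\gamma^2)-9\gamma^2t_0\right)\left(2F_0(\delta_0-p\mu\lambda^2)+\lambda^2t_0\right)$, $F=2F_0$, $G=3\lambda\gamma$; and such that each of these septuples satisfies the following conditions: (A1) $B^2-C^2+2pEF=0$, $2AB-2CD+pF^2=0$, $A^2-D^2+pG^2=0$; (A3) $\gcd(A,D,G)=1$, $E\not\equiv 0\pmod p$, $G\not\equiv 0\pmod p$; (A4) for every odd prime $l$ with $l\ne3$, $l\ne p$ and $l\mid\gcd(AC-BD,\ DE-CF,\ AE-BF)$, $p$ is a square in $\mathbb{Q}_l^\times$; (A5) there is an integer $H$ with $G-EH^6\equiv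 0\pmod p$ such that $A+\zeta BH^4$ is a quadratic non-residue in $\mathbb{F}_p^\times$ for every cube root of unity $\zeta\in\mathbb{F}_p^\times$; (A7) $A+B\not\equiv 0\pmod 3$ and $G\equiv 0\pmod 3$; and, for every integer $n\ge 1$, (A6) $v_3(E)-v_3(G)<6n$.
   Context: $v_3$ denotes the $3$-adic valuation. *)

theory Defs
  imports "HOL-Number_Theory.Number_Theory"
begin

definition v3 :: "int \<Rightarrow> int" where
  "v3 x = int (multiplicity (3::int) x)"

text \<open>For a prime l, the (nonzero) integer a is a square in the field of l-adic numbers
  Q_l.  Since Q_l is not available, we use the definition: a is nonzero and is an l-adic
  limit of squares of rationals with denominator prime to l, i.e. for every k there are
  integers u, v with v a unit at l and u^2 - a v^2 divisible by l^k.  (The squares of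
  Q_l^x form a closed subgroup and Q is dense in Q_l, so this is exactly squareness.)\<close>
definition square_in_Ql :: "int \<Rightarrow> int \<Rightarrow> bool" where
  "square_in_Ql l a \<longleftrightarrow> a \<noteq> 0 \<and>
     (\<forall>k::nat. \<exists>u v :: int. coprime v l \<and> l ^ k dvd (u\<^sup>2 - a * v\<^sup>2))"

definition param_form :: "int \<Rightarrow> int \<Rightarrow> int \<Rightarrow> int \<Rightarrow> int \<Rightarrow> int \<Rightarrow> int \<Rightarrow> int \<Rightarrow> bool" where
  "param_form p A B C D E F G \<longleftrightarrow>
    (\<exists>lam \<gamma> \<epsilon>0 \<delta>0 \<mu> t0 F0 :: int.
       lam \<noteq> 0 \<and> \<gamma> \<noteq> 0 \<and> odd lam \<and> odd \<gamma> \<and>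
       gcd lam (3 * \<gamma>) = 1 \<and> gcd p (3 * \<gamma>) = 1 \<and> gcd p lam = 1 \<and>
       \<epsilon>0 \<noteq> 0 \<and> \<delta>0 \<noteq> 0 \<and> p * lam\<^sup>2 * \<epsilon>0 + 9 * \<gamma>\<^sup>2 * \<delta>0 = 1 \<and>
       A = (p * lam\<^sup>2 - 9 * \<gamma>\<^sup>2) div 2 \<and>
       B = 2 * p * F0\<^sup>2 * (\<delta>0 - \<epsilon>0 - \<mu> * (p * lam\<^sup>2 + 9 * \<gamma>\<^sup>2))
           + (p * lam\<^sup>2 + 9 * \<gamma>\<^sup>2) * t0 * F0 \<and>
       C = 2 * p * F0\<^sup>2 * (\<delta>0 + \<epsilon>0 - \<mu> * (p * lam\<^sup>2 - 9 * \<gamma>\<^sup>2))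
           + (p * lam\<^sup>2 - 9 * \<gamma>\<^sup>2) * t0 * F0 \<and>
       D = (p * lam\<^sup>2 + 9 * \<gamma>\<^sup>2) div 2 \<and>
       E = F0 * (2 * p * F0 * (\<epsilon>0 + 9 * \<mu> * \<gamma>\<^sup>2) - 9 * \<gamma>\<^sup>2 * t0)
              * (2 * F0 * (\<delta>0 - p * \<mu> * lam\<^sup>2) + lam\<^sup>2 * t0) \<and>
       F = 2 * F0 \<and>
       G = 3 * lam * \<gamma>)"

definition cond_A1 :: "int \<Rightarrow> int \<Rightarrow> int \<Rightarrow> int \<Rightarrow> int \<Rightarrow> int \<Rightarrow> int \<Rightarrow> int \<Rightarrow> bool" where
  "cond_A1 p A B C D E F G \<longleftrightarrow>
     B\<^sup>2 - C\<^sup>2 + 2 * p * E * F = 0 \<and> 2 * A * B - 2 * C * D + p * F\<^sup>2 = 0 \<and>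
     A\<^sup>2 - D\<^sup>2 + p * G\<^sup>2 = 0"

definition cond_A3 :: "int \<Rightarrow> int \<Rightarrow> int \<Rightarrow> int \<Rightarrow> int \<Rightarrow> int \<Rightarrow> int \<Rightarrow> int \<Rightarrow> bool" where
  "cond_A3 p A B C D E F G \<longleftrightarrow>
     gcd A (gcd D G) = 1 \<and> \<not> [E = 0] (mod p) \<and> \<not> [G = 0] (mod p)"

definition cond_A4 :: "int \<Rightarrow> int \<Rightarrow> int \<Rightarrow> int \<Rightarrow> int \<Rightarrow> int \<Rightarrow> int \<Rightarrow> int \<Rightarrow> bool" where
  "cond_A4 p A B C D E F G \<longleftrightarrow>
     (\<forall>l::int. prime l \<and> odd l \<and> l \<noteq> 3 \<and> l \<noteq> p \<and>
        l dvd gcd (A * C - B * D) (gcd (D * E - C * F) (A * E - B * F))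
        \<longrightarrow> square_in_Ql l p)"

definition cond_A5 :: "int \<Rightarrow> int \<Rightarrow> int \<Rightarrow> int \<Rightarrow> int \<Rightarrow> int \<Rightarrow> int \<Rightarrow> int \<Rightarrow> bool" where
  "cond_A5 p A B C D E F G \<longleftrightarrow>
     (\<exists>H::int. [G - E * H ^ 6 = 0] (mod p) \<and>
        (\<forall>\<zeta>::int. [\<zeta> ^ 3 = 1] (mod p) \<longrightarrow>
           \<not> [A + \<zeta> * B * H ^ 4 = 0] (mod p) \<and> \<not> QuadRes p (A + \<zeta> * B * H ^ 4)))"

definition cond_A7 :: "int \<Rightarrow> int \<Rightarrow> int \<Rightarrow> int \<Rightarrow> int \<Rightarrow> int \<Rightarrow> int \<Rightarrow> int \<Rightarrow> bool" where
  "cond_A7 p A B C D E F G \<longleftrightarrow> \<not> [A + B = 0] (mod 3) \<and> [G = 0] (mod 3)"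

end

theory Submission
  imports Defs
begin

lemma fermat_int:
  fixes p a :: int
  assumes "prime p" "\<not> p dvd a"
  shows "[a ^ (nat p - 1) = 1] (mod p)"
proof -
  have p0: "p > 1" using assms(1) prime_gt_1_int by blast
  define n where "n = nat p"
  define a' where "a' = nat (a mod p)"
  have pn: "p = int n" using p0 n_def by simp
  have pn': "prime n" using assms(1) pn by (simp add: prime_int_nat_transfer)
  have aa: "int a' = a mod p" using p0 a'_def by simp
  have "\<not> n dvd a'"
  proof
    assume "n dvd a'"
    then have "int n dvd int a'" by simp
    then have "p dvd a mod p" using aa pn by simp
    then show False using assms(2) by (simp add: dvd_mod_iff)
  qed
  then have "[a' ^ (n - 1) = 1] (mod n)" using fermat_theorem pn' by blast
  then have "[int a' ^ (n - 1) = int 1] (mod int n)" using cong_int_iff by (metis of_nat_power)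
  then have "[(a mod p) ^ (n - 1) = 1] (mod p)" using aa pn by simp
  moreover have "[(a mod p) ^ (n - 1) = a ^ (n - 1)] (mod p)"
    by (intro cong_pow) (simp add: cong_def)
  ultimately show ?thesis unfolding n_def using cong_sym cong_trans by blast
qed

lemma cube_inj:
  fixes p a b :: int
  assumes "prime p" "[p = 2] (mod 3)" "\<not> p dvd b" "[a ^ 3 = b ^ 3] (mod p)"
  shows "[a = b] (mod p)"
proof -
  have p0: "p > 1" using assms(1) prime_gt_1_int by blast
  have "\<not> p dvd a"
  proof
    assume "p dvd a"
    then have "p dvd a ^ 3" by (rule dvd_trans[OF _ dvd_power[of 3 a]]) auto
    then have "p dvd b ^ 3" using assms(4) cong_dvd_iff by blast
    then show False using assms(1,3) prime_dvd_power by blast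
  qed
  define n where "n = nat p"
  have pn: "p = int n" using p0 n_def by simp
  have "int (n mod 3) = 2" using assms(2) pn unfolding cong_def by (simp add: of_nat_mod)
  then have n3: "n mod 3 = 2" by simp
  have key: "[x ^ (2 * n - 1) = x] (mod p)" if "\<not> p dvd x" for x
  proof -
    have f: "[x ^ (n - 1) = 1] (mod p)" using fermat_int[OF assms(1) that] n_def by simp
    have n2: "n \<ge> 2" using p0 pn by simp
    have e: "2 * n - 1 = Suc ((n - 1) * 2)" using n2 by simp
    have "x ^ (2 * n - 1) = x * (x ^ (n - 1)) ^ 2"
      unfolding e by (simp add: power_mult)
    moreover have "[x * (x ^ (n - 1)) ^ 2 = x * 1 ^ 2] (mod p)"
      using f by (intro cong_mult cong_pow cong_refl)
    ultimately show ?thesis by simp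
  qed
  have "3 dvd 2 * n - 1" using n3 by presburger
  then obtain k where k: "2 * n - 1 = 3 * k" by (elim dvdE)
  have "[(a ^ 3) ^ k = (b ^ 3) ^ k] (mod p)" using assms(4) by (rule cong_pow)
  then have "[a ^ (2 * n - 1) = b ^ (2 * n - 1)] (mod p)" unfolding k by (simp add: power_mult)
  then show ?thesis using key[OF \<open>\<not> p dvd a\<close>] key[OF assms(3)] cong_sym cong_trans by blast
qed

lemma sqrt2_mod:
  fixes p :: int
  assumes "prime p" "[p = 1] (mod 8)"
  shows "\<exists>w. [w ^ 2 = 2] (mod p)"
proof -
  have p0: "p > 1" using assms(1) prime_gt_1_int by blast
  define n where "n = nat p"
  have pn: "p = int n" using p0 n_def by simp
  have pn': "prime n" using assms(1) pn by (simp add: prime_int_nat_transfer)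
  have n1: "n > 1" using p0 pn by simp
  have "int (n mod 8) = 1" using assms(2) pn unfolding cong_def by (simp add: of_nat_mod)
  then have "n mod 8 = 1" by simp
  then have d8: "8 dvd n - 1" using n1 by presburger
  have "card {x\<in>totatives n. ord n x = 8} = totient 8"
    using prime_card_elements_with_ord_eq_totient[OF n1 pn', of 8] d8 by simp
  then have "card {x\<in>totatives n. ord n x = 8} > 0" by simp
  then obtain x where x: "ord n x = 8" using card_gt_0_iff by force
  have c8: "[x ^ 8 = 1] (mod n)" using ord_divides[of x 8 n] x by simp
  have c4: "\<not> [x ^ 4 = 1] (mod n)" using ord_divides[of x 4 n] x by simp
  define X where "X = int x"
  have C8: "[X ^ 8 = 1] (mod p)" using c8 cong_int_iff[of "x^8" 1 n] pn X_def by simp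
  have C4: "\<not> [X ^ 4 = 1] (mod p)" using c4 cong_int_iff[of "x^4" 1 n] pn X_def by simp
  have "p dvd (X ^ 4 - 1) * (X ^ 4 + 1)"
    using C8 unfolding cong_iff_dvd_diff by (simp add: algebra_simps)
  moreover have "\<not> p dvd X ^ 4 - 1" using C4 unfolding cong_iff_dvd_diff .
  ultimately have h: "p dvd X ^ 4 + 1" using assms(1) prime_dvd_mult_iff by blast
  have "(X + X ^ 7) ^ 2 - 2 = (X ^ 4 + 1) * (X ^ 2 * (1 - X ^ 4 + X ^ 8) + 2 * X ^ 4 - 2)"
    by (simp add: eval_nat_numeral algebra_simps)
  then have "p dvd (X + X ^ 7) ^ 2 - 2" using h by simp
  then show ?thesis unfolding cong_iff_dvd_diff by blast
qed

lemma A4_core: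
  fixes A B C D E F G p l :: int
  assumes R1: "B^2 - C^2 + 2*p*E*F = 0" and R2: "2*A*B - 2*C*D + p*F^2 = 0"
    and R3: "A^2 - D^2 + p*G^2 = 0"
    and l: "prime l" and n3: "\<not> l dvd 3" and np: "\<not> l dvd p" and nF: "\<not> l dvd F"
    and nG: "\<not> l dvd G"
    and AD: "D = A + 9"
    and dX: "l dvd A*C - B*D" and dY: "l dvd D*E - C*F" and dZ: "l dvd A*E - B*F"
  shows False
proof -
  have BC: "l dvd B \<and> l dvd C"
  proof (cases "l dvd A")
    case False
    have e1: "2*p*E*F = C^2 - B^2" using R1 by simp
    have e2: "p*F^2 = 2*C*D - 2*A*B" using R2 by simp
    have e3: "p*G^2 = D^2 - A^2" using R3 by simp
    have W: "2*p*F*(A*E - B*F) = A*(2*p*E*F) - 2*B*(p*F^2)" by (simp add: algebra_simps power2_eq_square)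
    have W2: "2*p*F*(A*E - B*F) = A*(C^2 - B^2) - 2*B*(2*C*D - 2*A*B)" unfolding W e1 e2 ..
    have eq0: "3*(D^2 - A^2)*B^2 = (A*C - B*D)^2 - 2*B*D*(A*C - B*D) - A*(A*(C^2 - B^2) - 2*B*(2*C*D - 2*A*B))"
      by (simp add: algebra_simps power2_eq_square)
    have eq: "3*p*G^2*B^2 = (A*C - B*D)^2 - 2*B*D*(A*C - B*D) - A*(2*p*F*(A*E - B*F))"
      using eq0 unfolding W2 e3[symmetric] by (simp add: algebra_simps)
    have "l dvd (A*C - B*D)^2 - 2*B*D*(A*C - B*D) - A*(2*p*F*(A*E - B*F))"
    proof (intro dvd_diff)
      show "l dvd (A*C - B*D)^2" using dX by (simp add: power2_eq_square dvd_mult2)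
      show "l dvd 2*B*D*(A*C - B*D)" using dX by (rule dvd_mult)
      show "l dvd A*(2*p*F*(A*E - B*F))" using dZ by (intro dvd_mult)
    qed
    then have "l dvd 3*p*G^2*B^2" using eq by simp
    then have lB: "l dvd B" using n3 np nG l by (simp add: prime_dvd_mult_iff prime_dvd_power_iff)
    have "l dvd (A*C - B*D) + B*D" by (rule dvd_add[OF dX dvd_mult2[OF lB]])
    then have "l dvd A*C" by simp
    then have "l dvd C" using False l by (simp add: prime_dvd_mult_iff)
    then show ?thesis using lB by simp
  next
    case True
    have nD: "\<not> l dvd D"
    proof
      assume "l dvd D"
      then have "l dvd D - A" using True by (rule dvd_diff)
      then have "l dvd 3 * 3" using AD by simp
      then have "l dvd 3" by (simp only: prime_dvd_mult_iff[OF l] disj_absorb)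
      then show False using n3 by contradiction
    qed
    have "l dvd A*C - (A*C - B*D)" by (rule dvd_diff[OF dvd_mult2[OF True] dX])
    then have "l dvd B*D" by simp
    then have lB: "l dvd B" using nD l by (simp add: prime_dvd_mult_iff)
    have e1: "2*p*E*F = C^2 - B^2" using R1 by simp
    have e2: "p*F^2 = 2*C*D - 2*A*B" using R2 by simp
    have W: "2*p*F*(D*E - C*F) = D*(2*p*E*F) - 2*C*(p*F^2)" by (simp add: algebra_simps power2_eq_square)
    have W2: "2*p*F*(D*E - C*F) = D*(C^2 - B^2) - 2*C*(2*C*D - 2*A*B)" unfolding W e1 e2 ..
    have eq0: "3*C^2*D^2 = 4*A*B*C*D - D^2*B^2 - D*(D*(C^2 - B^2) - 2*C*(2*C*D - 2*A*B))"
      by (simp add: algebra_simps power2_eq_square)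
    have eq: "3*C^2*D^2 = 4*A*B*C*D - D^2*B^2 - D*(2*p*F*(D*E - C*F))"
      using eq0 unfolding W2 .
    have "l dvd 4*A*B*C*D - D^2*B^2 - D*(2*p*F*(D*E - C*F))"
    proof (intro dvd_diff)
      have "l dvd A*(4*B*C*D)" using True by (rule dvd_mult2)
      then show "l dvd 4*A*B*C*D" by (simp add: ac_simps)
      have "l dvd B*(D^2*B)" using lB by (rule dvd_mult2)
      then show "l dvd D^2*B^2" by (simp add: ac_simps power2_eq_square)
      show "l dvd D*(2*p*F*(D*E - C*F))" using dY by (intro dvd_mult)
    qed
    then have "l dvd 3*C^2*D^2" using eq by simp
    then have "l dvd C" using n3 nD l by (simp add: prime_dvd_mult_iff prime_dvd_power_iff)
    then show ?thesis using lB by simp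
  qed
  have "p*F^2 = 2*C*D - 2*A*B" using R2 by simp
  moreover have "l dvd 2*C*D - 2*A*B"
  proof (intro dvd_diff)
    have "l dvd C*(2*D)" using BC by (intro dvd_mult2) auto
    then show "l dvd 2*C*D" by (simp add: ac_simps)
    have "l dvd B*(2*A)" using BC by (intro dvd_mult2) auto
    then show "l dvd 2*A*B" by (simp add: ac_simps)
  qed
  ultimately have "l dvd p*F^2" by simp
  then show False using np nF l by (simp add: prime_dvd_mult_iff prime_dvd_power_iff)
qed


lemma p_big:
  fixes p :: int
  assumes "prime p" "[p = 1] (mod 8)" "[p = 2] (mod 3)"
  shows "p \<ge> 9"
proof -
  have "p > 1" using assms(1) prime_gt_1_int by blast
  moreover have "p mod 8 = 1" using assms(2) unfolding cong_def by simp
  moreover have "p = 8 * (p div 8) + p mod 8" by simp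
  ultimately show ?thesis by presburger
qed
lemma prime_not_dvd_small:
  fixes p k :: int
  assumes "prime p" "p \<ge> 9" "0 < k" "k < 9"
  shows "\<not> p dvd k"
proof
  assume "p dvd k"
  then have "p \<le> k" using assms(3) zdvd_imp_le by blast
  then show False using assms by simp
qed

lemma nonres:
  fixes p x :: int
  assumes pr: "prime p" and p8: "[p = 1] (mod 8)" and p3: "[p = 2] (mod 3)"
    and hx: "[2 * x = -27] (mod p)"
  shows "\<not> [x = 0] (mod p) \<and> \<not> QuadRes p x"
proof
  have p9: "p \<ge> 9" using p_big[OF pr p8 p3] .
  have n27: "\<not> p dvd 27"
  proof
    assume "p dvd 27"
    then have "p dvd 3 ^ 3" by simp
    then have "p dvd 3" using pr prime_dvd_power by blast
    then show False using prime_not_dvd_small[OF pr p9, of 3] by simp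
  qed
  show "\<not> [x = 0] (mod p)"
  proof
    assume "[x = 0] (mod p)"
    then have "[2 * x = 2 * 0] (mod p)" by (intro cong_mult cong_refl)
    then have "[-27 = 0] (mod p)" using cong_trans[OF cong_sym[OF hx]] by simp
    then have "p dvd -27" by (simp add: cong_0_iff)
    then show False using n27 by simp
  qed
  show "\<not> QuadRes p x"
  proof
    assume "QuadRes p x"
    then obtain y where y: "[y ^ 2 = x] (mod p)" unfolding QuadRes_def by blast
    obtain w where w: "[w ^ 2 = 2] (mod p)" using sqrt2_mod[OF pr p8] by blast
    define z where "z = w * y"
    have "[z ^ 2 = w ^ 2 * y ^ 2] (mod p)" unfolding z_def by (simp add: power_mult_distrib)
    moreover have "[w ^ 2 * y ^ 2 = 2 * x] (mod p)" using w y by (rule cong_mult)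
    ultimately have "[z ^ 2 = -27] (mod p)" using hx cong_trans by blast
    then have dz: "p dvd z ^ 2 + 27" unfolding cong_iff_dvd_diff by simp
    have "(z - 3) ^ 3 - 6 ^ 3 = (z - 9) * (z ^ 2 + 27)" by (simp add: eval_nat_numeral algebra_simps)
    then have "p dvd (z - 3) ^ 3 - 6 ^ 3" using dz by simp
    then have "[(z - 3) ^ 3 = 6 ^ 3] (mod p)" unfolding cong_iff_dvd_diff .
    then have "[z - 3 = 6] (mod p)"
      using cube_inj[OF pr p3] prime_not_dvd_small[OF pr p9, of 6] by simp
    then have "p dvd z - 9" unfolding cong_iff_dvd_diff by simp
    then have "p dvd (z - 9) * (z + 9)" by simp
    then have "p dvd (z ^ 2 + 27) - (z - 9) * (z + 9)" by (rule dvd_diff[OF dz])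
    moreover have "(z ^ 2 + 27) - (z - 9) * (z + 9) = 2 ^ 2 * 3 ^ 3"
      by (simp add: eval_nat_numeral algebra_simps)
    ultimately have "p dvd 2 ^ 2 * 3 ^ 3" by simp
    then have "p dvd 2 \<or> p dvd 3"
      using prime_dvd_mult_iff[OF pr, of "2^2" "3^3"] prime_dvd_power_iff[OF pr, of 2 2]
        prime_dvd_power_iff[OF pr, of 3 3] by simp
    then show False using prime_not_dvd_small[OF pr p9, of 2] prime_not_dvd_small[OF pr p9, of 3]
      by simp
  qed
qed

lemma v3_bound:
  fixes U V :: int
  assumes "\<not> 3 dvd U" "\<not> 3 dvd V"
  shows "v3 (9 * U * V) \<le> 2"
proof -
  have "\<not> (3::int) ^ 3 dvd 9 * U * V"
  proof
    assume "(3::int) ^ 3 dvd 9 * U * V"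
    then have "9 * 3 dvd 9 * (U * V)" by (simp add: ac_simps)
    then have "(3::int) dvd U * V" by (subst (asm) dvd_mult_cancel_left) simp
    then show False using assms prime_dvd_mult_iff[of "3::int"] by simp
  qed
  moreover have "U \<noteq> 0" "V \<noteq> 0" using assms by auto
  ultimately have "multiplicity 3 (9 * U * V) < 3"
    using multiplicity_lessI[of "9 * U * V" 3 3] by simp
  then show ?thesis unfolding v3_def by simp
qed

lemma v3_3: "v3 3 = 1"
  unfolding v3_def by (simp add: multiplicity_self)

theorem lemma9p1:
  fixes p :: int
  assumes "prime p" and "[p = 1] (mod 8)" and "[p = 2] (mod 3)"
  shows "\<exists>S :: (int \<times> int \<times> int \<times> int \<times> int \<times> int \<times> int) set. infinite S \<and>
    (\<forall>(A, B, C, D, E, F, G) \<in> S.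
       param_form p A B C D E F G \<and>
       cond_A1 p A B C D E F G \<and> cond_A3 p A B C D E F G \<and> cond_A4 p A B C D E F G \<and>
       cond_A5 p A B C D E F G \<and> cond_A7 p A B C D E F G \<and>
       (\<forall>n::nat. n \<ge> 1 \<longrightarrow> v3 E - v3 G < 6 * int n))"
proof -
  note pr = assms(1) and p8 = assms(2) and p3 = assms(3)
  have p9: "p \<ge> 9" using p_big[OF pr p8 p3] .
  have pm3: "p mod 3 = 2" using p3 unfolding cong_def by simp
  have pm8: "p mod 8 = 1" using p8 unfolding cong_def by simp
  have n3p: "\<not> 3 dvd p" using pm3 by presburger
  have odd_p: "odd p" using pm8 by presburger
  have "\<not> p dvd 9"
  proof
    assume "p dvd 9"
    then have "p dvd 3 * 3" by simp
    then have "p dvd 3" using pr prime_dvd_mult_iff by blast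
    then show False using prime_not_dvd_small[OF pr p9, of 3] by simp
  qed
  then have "coprime p 9" using pr prime_imp_coprime by blast
  then have "gcd p 9 = 1" by simp
  have cop3: "coprime p 3" using \<open>coprime p 9\<close> coprime_mult_right_iff[of p 3 3] by simp
  have "\<exists>u v. u * p + v * 9 = gcd p 9" by (rule bezout_int)
  then obtain e d where ed: "e * p + d * 9 = 1" using \<open>gcd p 9 = 1\<close> by auto
  have rel: "p * e + 9 * d = 1" using ed by (simp add: ac_simps)
  have e0: "e \<noteq> 0"
  proof
    assume "e = 0"
    then have "9 * d = 1" using rel by simp
    then show False by presburger
  qed
  have d0: "d \<noteq> 0"
  proof
    assume "d = 0"
    then have "p * e = 1" using rel by simp
    then have "p dvd 1" by (metis dvd_triv_left)
    then have "p \<le> 1" by (rule zdvd_imp_le) simp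
    then show False using p9 by simp
  qed
  obtain t j where tj: "3 * t = p * j - 1" and t3: "\<not> 3 dvd t"
  proof -
    define t0 where "t0 = (2 * p - 1) div 3"
    have ht0: "3 * t0 = p * 2 - 1" unfolding t0_def using pm3 by presburger
    show ?thesis
    proof (cases "3 dvd t0")
      case False
      then show ?thesis using that[of t0 2] ht0 by simp
    next
      case True
      have "3 * (t0 + p) = p * 5 - 1" using ht0 by simp
      moreover have "\<not> 3 dvd t0 + p" using True n3p by presburger
      ultimately show ?thesis using that[of "t0 + p" 5] by blast
    qed
  qed
  define A0 where "A0 = (p - 9) div 2"
  define D0 where "D0 = (p + 9) div 2"
  have hA: "p = 2 * A0 + 9" unfolding A0_def using odd_p by presburger
  have hD: "D0 = A0 + 9" unfolding D0_def A0_def using odd_p by presburger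
  define Bf where "Bf = (\<lambda>m::int. 2 * p * 3\<^sup>2 * (d - e - m * (p + 9)) + (p + 9) * t * 3)"
  define Cf where "Cf = (\<lambda>m::int. 2 * p * 3\<^sup>2 * (d + e - m * (p - 9)) + (p - 9) * t * 3)"
  define Ef where "Ef = (\<lambda>m::int. 3 * (2 * p * 3 * (e + 9 * m) - 9 * t) * (2 * 3 * (d - p * m) + t))"
  define sep where "sep = (\<lambda>m::int. (A0, Bf m, Cf m, D0, Ef m, 2 * 3::int, 3 * 1 * 1::int))"
  have inj: "inj sep"
  proof (rule injI)
    fix m1 m2 assume "sep m1 = sep m2"
    then have "Bf m1 = Bf m2" unfolding sep_def by simp
    then have "18 * p * (p + 9) * (m2 - m1) = 0" unfolding Bf_def by (simp add: algebra_simps)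
    then show "m1 = m2" using p9 by simp
  qed
  have key: "param_form p A B C D E F G \<and>
       cond_A1 p A B C D E F G \<and> cond_A3 p A B C D E F G \<and> cond_A4 p A B C D E F G \<and>
       cond_A5 p A B C D E F G \<and> cond_A7 p A B C D E F G \<and>
       (\<forall>n::nat. n \<ge> 1 \<longrightarrow> v3 E - v3 G < 6 * int n)"
    if "(A, B, C, D, E, F, G) = sep m" for A B C D E F G m
  proof -
    have AA: "A = A0" and BB: "B = Bf m" and CC: "C = Cf m" and DD: "D = D0" and EE: "E = Ef m"
      and FF: "F = 6" and GG: "G = 3"
      using that unfolding sep_def by simp_all
    have P1: "param_form p A B C D E F G"
      unfolding param_form_def
      apply (rule exI[of _ 1], rule exI[of _ 1], rule exI[of _ e], rule exI[of _ d], rule exI[of _ m],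
          rule exI[of _ t], rule exI[of _ 3])
      using e0 d0 rel cop3 n3p pr
      by (simp add: AA BB CC DD EE FF GG A0_def D0_def Bf_def Cf_def Ef_def coprime_commute
          prime_imp_coprime)
    have hB: "B = 18 * p * (d - e - m * (p + 9)) + 3 * (p + 9) * t" using BB Bf_def by simp
    have hC: "C = 18 * p * (d + e - m * (p - 9)) + 3 * (p - 9) * t" using CC Cf_def by simp
    have hE: "E = 9 * (2 * p * (e + 9 * m) - 3 * t) * (6 * (d - p * m) + t)" using EE Ef_def by simp
    have hA2: "p = 2 * A + 9" using hA AA by simp
    have hD2: "D = A + 9" using hD AA DD by simp
    have R1: "B^2 - C^2 + 2*p*E*F = 0" unfolding hB hC hE FF by (simp add: algebra_simps power2_eq_square)
    have "2*A*B - 2*C*D + p*F^2 = -36*p*(p*e + 9*d - 1)" unfolding hB hC hD2 FF hA2 by (simp add: algebra_simps power2_eq_square)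
    then have R2: "2*A*B - 2*C*D + p*F^2 = 0" using rel by simp
    have R3: "A^2 - D^2 + p*G^2 = 0" unfolding hD2 GG hA2 by (simp add: algebra_simps power2_eq_square)
    have P2: "cond_A1 p A B C D E F G" unfolding cond_A1_def using R1 R2 R3 by simp
    define K where "K = 18*(9*m*t+(e+9*m)*(6*d+t)-6*p*(e+9*m)*m)+18*t*e-3*p*j^2"
    have "E - 3 - p * K = -18*t*(p*e + 9*d - 1) + (-3 - 9*t - 3*p*j)*(3*t - p*j + 1)"
      unfolding hE K_def by (simp add: algebra_simps power2_eq_square)
    then have "E - 3 = p * K" using rel tj by simp
    then have E3: "[E = 3] (mod p)" unfolding cong_iff_dvd_diff by simp
    have "2 * (A + B) + 27 = (2*A - p + 9) + p * (1 + 36*(d - e - m*(p+9)) + 6*t + 18*j)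
       + 18*(3*t - p*j + 1)"
      unfolding hB by (simp add: algebra_simps)
    then have "2 * (A + B) + 27 = p * (1 + 36*(d - e - m*(p+9)) + 6*t + 18*j)"
      using hA2 tj by simp
    then have AB: "[2 * (A + B) = -27] (mod p)" unfolding cong_iff_dvd_diff by simp
    have n3p': "\<not> p dvd 3" using prime_not_dvd_small[OF pr p9, of 3] by simp
    have P3: "cond_A3 p A B C D E F G"
    proof -
      have "\<not> 3 dvd D"
      proof
        assume "3 dvd D"
        then show False using hA2 hD2 n3p by presburger
      qed
      then have "coprime 3 D" by (intro prime_imp_coprime) auto
      then have "gcd D G = 1" using GG by (simp add: coprime_commute)
      moreover have "\<not> [E = 0] (mod p)"
      proof
        assume "[E = 0] (mod p)"
        then have "[3 = 0] (mod p)" using E3 cong_sym cong_trans by blast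
        then show False using n3p' by (simp add: cong_0_iff)
      qed
      moreover have "\<not> [G = 0] (mod p)" using n3p' GG by (simp add: cong_0_iff)
      ultimately show ?thesis unfolding cond_A3_def by simp
    qed
    have P4: "cond_A4 p A B C D E F G"
      unfolding cond_A4_def
    proof (intro allI impI)
      fix l :: int
      assume h: "prime l \<and> odd l \<and> l \<noteq> 3 \<and> l \<noteq> p \<and>
        l dvd gcd (A * C - B * D) (gcd (D * E - C * F) (A * E - B * F))"
      then have l: "prime l" and lo: "odd l" and l3: "l \<noteq> 3" and lp: "l \<noteq> p" by auto
      have l1: "l > 1" using l prime_gt_1_int by blast
      have g: "l dvd gcd (A * C - B * D) (gcd (D * E - C * F) (A * E - B * F))" using h by blast
      have g2: "l dvd gcd (D * E - C * F) (A * E - B * F)" by (rule dvd_trans[OF g gcd_dvd2])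
      have ld: "l dvd A * C - B * D" "l dvd D * E - C * F" "l dvd A * E - B * F"
        by (rule dvd_trans[OF g gcd_dvd1], rule dvd_trans[OF g2 gcd_dvd1], rule dvd_trans[OF g2 gcd_dvd2])
      have nl3: "\<not> l dvd 3"
      proof
        assume "l dvd 3"
        then have "l \<le> 3" by (rule zdvd_imp_le) simp
        then have "l = 2 \<or> l = 3" using l1 by auto
        then show False using lo l3 by auto
      qed
      have nl2: "\<not> l dvd 2"
      proof
        assume "l dvd 2"
        then have "l \<le> 2" by (rule zdvd_imp_le) simp
        then have "l = 2" using l1 by auto
        then show False using lo by simp
      qed
      have nlp: "\<not> l dvd p"
      proof
        assume "l dvd p"
        moreover have all: "\<forall>m. 0 \<le> m \<and> m dvd p \<longrightarrow> m = 1 \<or> m = p" using pr unfolding prime_int_iff by blast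
        moreover have "0 \<le> l" using l1 by simp
        ultimately have "l = 1 \<or> l = p" by blast
        then show False using lp l1 by auto
      qed
      have "l dvd 2 * 3 \<longleftrightarrow> l dvd 2 \<or> l dvd 3" by (rule prime_dvd_mult_iff[OF l])
      then have "\<not> l dvd 2 * 3" using nl2 nl3 by blast
      then have nlF: "\<not> l dvd F" using FF by simp
      have nlG: "\<not> l dvd G" using GG nl3 by simp
      show "square_in_Ql l p"
        using A4_core[OF R1 R2 R3 l nl3 nlp nlF nlG hD2 ld] by simp
    qed
    have P5: "cond_A5 p A B C D E F G"
      unfolding cond_A5_def
    proof (intro exI[of _ 1] conjI allI impI)
      show "[G - E * 1 ^ 6 = 0] (mod p)" using E3 GG unfolding cong_iff_dvd_diff
        by (metis diff_zero dvd_minus_iff minus_diff_eq mult_1_right power_one)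
      fix \<zeta> :: int
      assume "[\<zeta> ^ 3 = 1] (mod p)"
      then have "[\<zeta> ^ 3 = 1 ^ 3] (mod p)" by simp
      moreover have "\<not> p dvd 1" using prime_not_dvd_small[OF pr p9, of 1] by simp
      ultimately have z1: "[\<zeta> = 1] (mod p)" using cube_inj[OF pr p3] by blast
      have "[\<zeta> * B = 1 * B] (mod p)" by (rule cong_mult[OF z1 cong_refl])
      then have "[A + \<zeta> * B = A + 1 * B] (mod p)" by (rule cong_add[OF cong_refl])
      then have "[2 * (A + \<zeta> * B) = 2 * (A + 1 * B)] (mod p)" by (rule cong_mult[OF cong_refl])
      then have "[2 * (A + \<zeta> * B * 1 ^ 4) = 2 * (A + 1 * B)] (mod p)" by simp
      then have "[2 * (A + \<zeta> * B * 1 ^ 4) = -27] (mod p)" using AB cong_trans by simp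
      then have "\<not> [A + \<zeta> * B * 1 ^ 4 = 0] (mod p) \<and> \<not> QuadRes p (A + \<zeta> * B * 1 ^ 4)"
        by (rule nonres[OF pr p8 p3])
      then show "\<not> [A + \<zeta> * B * 1 ^ 4 = 0] (mod p)" "\<not> QuadRes p (A + \<zeta> * B * 1 ^ 4)" by auto
    qed
    have P7: "cond_A7 p A B C D E F G"
    proof -
      have "3 dvd B" unfolding hB by simp
      moreover have "\<not> 3 dvd A"
      proof
        assume "3 dvd A"
        then show False using hA2 n3p by presburger
      qed
      ultimately have "\<not> 3 dvd A + B" by (metis dvd_add_left_iff)
      then show ?thesis unfolding cond_A7_def using GG by (simp add: cong_0_iff)
    qed
    have P6: "\<forall>n::nat. n \<ge> 1 \<longrightarrow> v3 E - v3 G < 6 * int n"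
    proof -
      have U: "\<not> 3 dvd 2 * p * (e + 9 * m) - 3 * t"
      proof
        define k where "k = 6 * p * m - t"
        have "2 * p * (e + 9 * m) - 3 * t = 2 - 18 * d + 3 * k + 2 * (p * e + 9 * d - 1)"
          unfolding k_def by (simp add: algebra_simps)
        then have "2 * p * (e + 9 * m) - 3 * t = 2 - 18 * d + 3 * k" using rel by simp
        moreover assume "3 dvd 2 * p * (e + 9 * m) - 3 * t"
        ultimately have "3 dvd 2 - 18 * d + 3 * k" by simp
        then show False by presburger
      qed
      have V: "\<not> 3 dvd 6 * (d - p * m) + t"
      proof
        assume "3 dvd 6 * (d - p * m) + t"
        moreover have "3 dvd 6 * (d - p * m)" by simp
        ultimately have "3 dvd t" by (metis dvd_add_right_iff)
        then show False using t3 by simp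
      qed
      have "v3 E \<le> 2" unfolding hE by (rule v3_bound[OF U V])
      then show ?thesis using GG v3_3 by auto
    qed
    show ?thesis using P1 P2 P3 P4 P5 P6 P7 by blast
  qed
  show ?thesis
  proof (intro exI conjI)
    show "infinite (range sep)"
    proof
      assume "finite (range sep)"
      then have "finite (UNIV :: int set)" using inj by (rule finite_imageD)
      then show False by simp
    qed
    show "\<forall>(A, B, C, D, E, F, G) \<in> range sep. param_form p A B C D E F G \<and>
       cond_A1 p A B C D E F G \<and> cond_A3 p A B C D E F G \<and> cond_A4 p A B C D E F G \<and>
       cond_A5 p A B C D E F G \<and> cond_A7 p A B C D E F G \<and>
       (\<forall>n::nat. n \<ge> 1 \<longrightarrow> v3 E - v3 G < 6 * int n)"
    proof
      fix x assume "x \<in> range sep"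
      then obtain m where xm: "x = sep m" by blast
      obtain A B C D E F G where xe: "x = (A, B, C, D, E, F, G)" by (cases x) auto
      have k: "param_form p A B C D E F G \<and>
       cond_A1 p A B C D E F G \<and> cond_A3 p A B C D E F G \<and> cond_A4 p A B C D E F G \<and>
       cond_A5 p A B C D E F G \<and> cond_A7 p A B C D E F G \<and>
       (\<forall>n::nat. n \<ge> 1 \<longrightarrow> v3 E - v3 G < 6 * int n)"
        by (rule key) (use xm xe in simp)
      show "case x of (A, B, C, D, E, F, G) \<Rightarrow> param_form p A B C D E F G \<and>
       cond_A1 p A B C D E F G \<and> cond_A3 p A B C D E F G \<and> cond_A4 p A B C D E F G \<and>
       cond_A5 p A B C D E F G \<and> cond_A7 p A B C D E F G \<and>
       (\<forall>n::nat. n \<ge> 1 \<longrightarrow> v3 E - v3 G < 6 * int n)"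
        unfolding xe prod.case using k .
    qed
  qed
qed

end
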